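(* Let $M$ be a faithful graded $R$-module and $U$ a proper graded submodule of $M$ such that $J_{gr}(M/U)$ is the zero submodule of $M/U$ and $J_{gr}(R)\subseteq (U:_RM)$. Then $U$ is a graded weakly $J_{gr}$-semiprime submodule of $M$ if and only if $(U:_RM)$ is a graded weakly $J_{gr}$-semiprime ideal of $R$.
   Context: Standing conventions: $\Gamma$ is a group, $R=\bigoplus_{g\in\Gamma}R_g$ is a commutative $\Gamma$-graded ring with identity, and $M=\bigoplus_{g\in\Gamma}M_g$ is a unitary $\Gamma$-graded $R$-module. $h(R)$, $h(M)$ are the homogeneous elements. A submodule $U$ is graded if $U=\bigoplus_g(U\cap M_g)$; $M/U$ has the induced grading. $M$ is faithful if $\mathrm{ann}_R(M)=\{r: rM=0\}=0$. $(U:_RM)=\{r\in R: rM\subseteq U\}$. For a graded module $N$, a graded submodule $U\neq N$ is Gr-maximal if every graded submodule between $U$ and $N$ equals $U$ or $N$; $J_{gr}(N)$ is the intersection of all Gr-maximal submodules of $N$ ($=N$ if none); $J_{gr}(R)$ is this for $N=R$. A proper graded submodule $U$ of $M$ is graded weakly $J_{gr}$-semiprime if whenever $r_g\in h(R)$, $m_h\in h(M)$, $n\in\mathbb{Z}^+$ and $0\neq r_g^nm_h\in U$, then $r_gm_h\in U+J_{gr}(M)$; a graded ideal of $R$ is graded weakly $J_{gr}$-semiprime if it is so as a submodule of the graded $R$-module $R$. *)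

theory Defs
  imports Complex_Main
begin

text \<open>Gamma is a (not necessarily abelian) group, written additively: type class group_add.
  A grading of an abelian group (type 'a) is a family A :: 'g => 'a set.\<close>

definition add_subgroup :: "'a::ab_group_add set \<Rightarrow> bool" where
  "add_subgroup S \<longleftrightarrow> 0 \<in> S \<and> (\<forall>x\<in>S. \<forall>y\<in>S. x + y \<in> S) \<and> (\<forall>x\<in>S. - x \<in> S)"

definition internal_direct_sum :: "('g \<Rightarrow> 'a::ab_group_add set) \<Rightarrow> bool" where
  "internal_direct_sum A \<longleftrightarrow> (\<forall>g. add_subgroup (A g)) \<and>
     (\<forall>x. \<exists>!f. finite {g. f g \<noteq> 0} \<and> (\<forall>g. f g \<in> A g) \<and> x = sum f {g. f g \<noteq> 0})"

definition graded_ring :: "('g::group_add \<Rightarrow> 'r::comm_ring_1 set) \<Rightarrow> bool" where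
  "graded_ring Rg \<longleftrightarrow> internal_direct_sum Rg \<and>
     (\<forall>g h. \<forall>a\<in>Rg g. \<forall>b\<in>Rg h. a * b \<in> Rg (g + h))"

definition graded_module :: "('g::group_add \<Rightarrow> 'r::comm_ring_1 set) \<Rightarrow> ('r \<Rightarrow> 'm::ab_group_add \<Rightarrow> 'm)
     \<Rightarrow> ('g \<Rightarrow> 'm set) \<Rightarrow> bool" where
  "graded_module Rg smult Mg \<longleftrightarrow> module smult \<and> internal_direct_sum Mg \<and>
     (\<forall>g h. \<forall>a\<in>Rg g. \<forall>m\<in>Mg h. smult a m \<in> Mg (g + h))"

definition faithful :: "('r::comm_ring_1 \<Rightarrow> 'm::ab_group_add \<Rightarrow> 'm) \<Rightarrow> bool" where
  "faithful smult \<longleftrightarrow> (\<forall>r. (\<forall>m. smult r m = 0) \<longrightarrow> r = 0)"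

definition colon :: "('r \<Rightarrow> 'm \<Rightarrow> 'm) \<Rightarrow> 'm set \<Rightarrow> 'r set" where
  "colon smult U = {r. \<forall>m. smult r m \<in> U}"

text \<open>Generic graded module given by carrier N, zero z, addition, scalar action and grading Ng
  (used both for M, for R and for the quotient M/U).  hsums z add A is the set of finite sums
  of elements of the sets A g.\<close>
inductive_set hsums :: "'n \<Rightarrow> ('n \<Rightarrow> 'n \<Rightarrow> 'n) \<Rightarrow> ('g \<Rightarrow> 'n set) \<Rightarrow> 'n set"
  for z add A where
  hsums_zero: "z \<in> hsums z add A"
| hsums_add: "x \<in> A g \<Longrightarrow> y \<in> hsums z add A \<Longrightarrow> add x y \<in> hsums z add A"

text \<open>Graded submodule: a submodule S with S = sum over g of (S inter N_g) (the sum is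
  automatically direct since the grading of N is).\<close>
definition gr_submodule :: "'n set \<Rightarrow> 'n \<Rightarrow> ('n \<Rightarrow> 'n \<Rightarrow> 'n) \<Rightarrow> ('r \<Rightarrow> 'n \<Rightarrow> 'n)
     \<Rightarrow> ('g \<Rightarrow> 'n set) \<Rightarrow> 'n set \<Rightarrow> bool" where
  "gr_submodule N z add scale Ng S \<longleftrightarrow> S \<subseteq> N \<and> z \<in> S \<and>
     (\<forall>x\<in>S. \<forall>y\<in>S. add x y \<in> S) \<and> (\<forall>r. \<forall>x\<in>S. scale r x \<in> S) \<and>
     S \<subseteq> hsums z add (\<lambda>g. S \<inter> Ng g)"

definition gr_maximal :: "'n set \<Rightarrow> 'n \<Rightarrow> ('n \<Rightarrow> 'n \<Rightarrow> 'n) \<Rightarrow> ('r \<Rightarrow> 'n \<Rightarrow> 'n)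
     \<Rightarrow> ('g \<Rightarrow> 'n set) \<Rightarrow> 'n set \<Rightarrow> bool" where
  "gr_maximal N z add scale Ng S \<longleftrightarrow> gr_submodule N z add scale Ng S \<and> S \<noteq> N \<and>
     (\<forall>T. gr_submodule N z add scale Ng T \<and> S \<subseteq> T \<longrightarrow> T = S \<or> T = N)"

definition J_gr :: "'n set \<Rightarrow> 'n \<Rightarrow> ('n \<Rightarrow> 'n \<Rightarrow> 'n) \<Rightarrow> ('r \<Rightarrow> 'n \<Rightarrow> 'n)
     \<Rightarrow> ('g \<Rightarrow> 'n set) \<Rightarrow> 'n set" where
  "J_gr N z add scale Ng = N \<inter> \<Inter> {S. gr_maximal N z add scale Ng S}"

text \<open>Quotient module M/U, elements are cosets x + U; zero is U.\<close>
definition qcoset :: "'m::ab_group_add set \<Rightarrow> 'm \<Rightarrow> 'm set" where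
  "qcoset U x = {x + u | u. u \<in> U}"

definition q_add :: "'m::ab_group_add set \<Rightarrow> 'm set \<Rightarrow> 'm set" where
  "q_add C D = {x + y | x y. x \<in> C \<and> y \<in> D}"

definition q_scale :: "('r \<Rightarrow> 'm::ab_group_add \<Rightarrow> 'm) \<Rightarrow> 'm set \<Rightarrow> 'r \<Rightarrow> 'm set \<Rightarrow> 'm set" where
  "q_scale smult U r C = {smult r x + u | x u. x \<in> C \<and> u \<in> U}"

definition J_gr_quot :: "('r \<Rightarrow> 'm::ab_group_add \<Rightarrow> 'm) \<Rightarrow> ('g \<Rightarrow> 'm set) \<Rightarrow> 'm set \<Rightarrow> 'm set set" where
  "J_gr_quot smult Mg U =
     J_gr (range (qcoset U)) U q_add (q_scale smult U) (\<lambda>g. qcoset U ` Mg g)"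

definition gr_weakly_Jgr_semiprime ::
  "('g::group_add \<Rightarrow> 'r::comm_ring_1 set) \<Rightarrow> ('r \<Rightarrow> 'm::ab_group_add \<Rightarrow> 'm) \<Rightarrow> ('g \<Rightarrow> 'm set)
     \<Rightarrow> 'm set \<Rightarrow> bool" where
  "gr_weakly_Jgr_semiprime Rg smult Mg U \<longleftrightarrow>
     gr_submodule UNIV 0 (+) smult Mg U \<and> U \<noteq> UNIV \<and>
     (\<forall>g h r m (n::nat). r \<in> Rg g \<longrightarrow> m \<in> Mg h \<longrightarrow> 0 < n \<longrightarrow>
        smult (r ^ n) m \<noteq> 0 \<longrightarrow> smult (r ^ n) m \<in> U \<longrightarrow>
        smult r m \<in> {u + j | u j. u \<in> U \<and> j \<in> J_gr UNIV 0 (+) smult Mg})"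

definition gr_weakly_Jgr_semiprime_ideal ::
  "('g::group_add \<Rightarrow> 'r::comm_ring_1 set) \<Rightarrow> 'r set \<Rightarrow> bool" where
  "gr_weakly_Jgr_semiprime_ideal Rg I \<longleftrightarrow> gr_weakly_Jgr_semiprime Rg (*) Rg I"

end

theory Submission imports Defs begin


lemma hsums_mono_idx:
  "x \<in> hsums z add A \<Longrightarrow> (\<And>g. A g \<subseteq> B (f g)) \<Longrightarrow> x \<in> hsums z add B"
proof (induction rule: hsums.induct)
  case hsums_zero show ?case by (rule hsums.hsums_zero)
next
  case (hsums_add x g y) then show ?case by (meson hsums.hsums_add subsetD)
qed

lemma hsums_mono:
  "x \<in> hsums z add A \<Longrightarrow> (\<And>g. A g \<subseteq> B g) \<Longrightarrow> x \<in> hsums z add B"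
  by (rule hsums_mono_idx[where f=id]) auto

lemma hsums_plus:
  "(x::'a::ab_group_add) \<in> hsums 0 (+) A \<Longrightarrow> y \<in> hsums 0 (+) A \<Longrightarrow> x + y \<in> hsums 0 (+) A"
proof (induction rule: hsums.induct)
  case hsums_zero then show ?case by simp
next
  case (hsums_add x g y') then show ?case by (simp add: add.assoc hsums.hsums_add)
qed

lemma sum_hsums:
  "finite F \<Longrightarrow> (\<forall>g\<in>F. f g \<in> A g) \<Longrightarrow> sum f F \<in> hsums (0::'a::ab_group_add) (+) A"
proof (induction rule: finite_induct)
  case empty then show ?case by (simp add: hsums.hsums_zero)
next
  case (insert g F) then show ?case by (auto intro: hsums.hsums_add)
qed

lemma ids_sum:
  assumes "internal_direct_sum A"
  obtains F f where "finite F" "\<forall>g\<in>F. f g \<in> A g" "x = sum f F"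
proof -
  from assms obtain f where "finite {g. f g \<noteq> 0}" "\<forall>g. f g \<in> A g" "x = sum f {g. f g \<noteq> 0}"
    unfolding internal_direct_sum_def by metis
  then show ?thesis using that by blast
qed

lemma ids_hsums:
  assumes "internal_direct_sum A" shows "x \<in> hsums 0 (+) A"
  using ids_sum[OF assms, of x] sum_hsums by metis

lemma hsums_sum:
  assumes "x \<in> hsums (0::'a::ab_group_add) (+) A"
    and cl: "\<And>g a b. a \<in> A g \<Longrightarrow> b \<in> A g \<Longrightarrow> a + b \<in> A g"
  shows "\<exists>D p. finite D \<and> (\<forall>d\<in>D. p d \<in> A d) \<and> x = sum p D"
  using assms(1)
proof (induction rule: hsums.induct)
  case hsums_zero then show ?case by (rule exI[of _ "{}"]) simp
next
  case (hsums_add x g y)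
  then obtain D p where D: "finite D" "\<forall>d\<in>D. p d \<in> A d" "y = sum p D" by blast
  show ?case
  proof (cases "g \<in> D")
    case True
    let ?p = "p(g := x + p g)"
    have "sum ?p D = ?p g + sum ?p (D - {g})" using D(1) True by (simp add: sum.remove)
    also have "sum ?p (D - {g}) = sum p (D - {g})" by (rule sum.cong) auto
    finally have 1: "sum ?p D = x + p g + sum p (D - {g})" by simp
    have "p g + sum p (D - {g}) = sum p D" using D(1) True by (simp add: sum.remove)
    then have "sum ?p D = x + y" using 1 D(3) by (simp add: add.assoc)
    moreover have "\<forall>d\<in>D. ?p d \<in> A d" using D(2) True hsums_add.hyps(1) cl by auto
    ultimately show ?thesis using D(1) by metis
  next
    case False
    let ?p = "p(g := x)"
    have "sum ?p (insert g D) = x + sum ?p D" using D(1) False by simp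
    also have "sum ?p D = sum p D" using False by (intro sum.cong) auto
    finally have "sum ?p (insert g D) = x + y" using D(3) by simp
    moreover have "\<forall>d\<in>insert g D. ?p d \<in> A d" using D(2) False hsums_add.hyps(1) by auto
    ultimately show ?thesis using D(1) by (metis finite_insert)
  qed
qed

lemma decomp_unique:
  assumes ids: "internal_direct_sum A"
    and "finite D" "\<forall>d\<in>D. p d \<in> A d" "finite E" "\<forall>d\<in>E. q d \<in> A d"
    and eq: "sum p D = sum q E"
  shows "(if d \<in> D then p d else 0) = (if d \<in> E then q d else 0)"
proof -
  define p' where "p' = (\<lambda>d. if d \<in> D then p d else 0)"
  define q' where "q' = (\<lambda>d. if d \<in> E then q d else 0)"
  have z: "\<And>g. 0 \<in> A g" using ids unfolding internal_direct_sum_def add_subgroup_def by blast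
  have fp: "finite {g. p' g \<noteq> 0}" using assms(2) by (rule finite_subset[rotated]) (auto simp: p'_def)
  have fq: "finite {g. q' g \<noteq> 0}" using assms(4) by (rule finite_subset[rotated]) (auto simp: q'_def)
  have ap: "\<forall>g. p' g \<in> A g" using assms(3) z by (auto simp: p'_def)
  have aq: "\<forall>g. q' g \<in> A g" using assms(5) z by (auto simp: q'_def)
  have sp: "sum p' {g. p' g \<noteq> 0} = sum p D"
  proof -
    have "sum p' {g. p' g \<noteq> 0} = sum p' D"
      by (rule sum.mono_neutral_left) (use assms(2) in \<open>auto simp: p'_def\<close>)
    also have "\<dots> = sum p D" by (rule sum.cong) (auto simp: p'_def)
    finally show ?thesis .
  qed
  have sq: "sum q' {g. q' g \<noteq> 0} = sum q E"
  proof -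
    have "sum q' {g. q' g \<noteq> 0} = sum q' E"
      by (rule sum.mono_neutral_left) (use assms(4) in \<open>auto simp: q'_def\<close>)
    also have "\<dots> = sum q E" by (rule sum.cong) (auto simp: q'_def)
    finally show ?thesis .
  qed
  from ids have "\<exists>!f. finite {g. f g \<noteq> 0} \<and> (\<forall>g. f g \<in> A g) \<and> sum p D = sum f {g. f g \<noteq> 0}"
    unfolding internal_direct_sum_def by blast
  then have "p' = q'" using fp fq ap aq sp sq eq by metis
  then show ?thesis by (metis p'_def q'_def)
qed



lemma qc_eq:
  assumes "add_subgroup U"
  shows "qcoset U a = qcoset U b \<longleftrightarrow> a - b \<in> U"
proof
  assume h: "qcoset U a = qcoset U b"
  have "a \<in> qcoset U a" using assms unfolding qcoset_def add_subgroup_def by force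
  then obtain u where "u \<in> U" "a = b + u" using h unfolding qcoset_def by auto
  then show "a - b \<in> U" by simp
next
  assume h: "a - b \<in> U"
  have h2: "b - a \<in> U" using assms h unfolding add_subgroup_def by (metis minus_diff_eq)
  show "qcoset U a = qcoset U b"
  proof (rule set_eqI)
    fix z
    have "z \<in> qcoset U a \<Longrightarrow> z \<in> qcoset U b"
    proof -
      assume "z \<in> qcoset U a"
      then obtain u where u: "u \<in> U" "z = a + u" unfolding qcoset_def by auto
      then have "(a - b) + u \<in> U" using h assms unfolding add_subgroup_def by blast
      moreover have "z = b + ((a - b) + u)" using u by simp
      ultimately show ?thesis unfolding qcoset_def by blast
    qed
    moreover have "z \<in> qcoset U b \<Longrightarrow> z \<in> qcoset U a"
    proof -
      assume "z \<in> qcoset U b"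
      then obtain u where u: "u \<in> U" "z = b + u" unfolding qcoset_def by auto
      then have "(b - a) + u \<in> U" using h2 assms unfolding add_subgroup_def by blast
      moreover have "z = a + ((b - a) + u)" using u by simp
      ultimately show ?thesis unfolding qcoset_def by blast
    qed
    ultimately show "z \<in> qcoset U a \<longleftrightarrow> z \<in> qcoset U b" by blast
  qed
qed

lemma qc_zero: "qcoset U 0 = U"
  unfolding qcoset_def by auto

lemma qc_is_U:
  assumes "add_subgroup U" shows "qcoset U a = U \<longleftrightarrow> a \<in> U"
  using qc_eq[OF assms, of a 0] qc_zero[of U] by simp

lemma qc_add:
  assumes "add_subgroup U"
  shows "q_add (qcoset U a) (qcoset U b) = qcoset U (a + b)"
proof (rule set_eqI)
  fix z
  show "z \<in> q_add (qcoset U a) (qcoset U b) \<longleftrightarrow> z \<in> qcoset U (a + b)"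
  proof
    assume "z \<in> q_add (qcoset U a) (qcoset U b)"
    then obtain u v where "u \<in> U" "v \<in> U" "z = (a + u) + (b + v)"
      unfolding q_add_def qcoset_def by auto
    moreover then have "u + v \<in> U" using assms unfolding add_subgroup_def by blast
    ultimately show "z \<in> qcoset U (a + b)" unfolding qcoset_def
      by (auto intro!: exI[of _ "u + v"] simp: algebra_simps)
  next
    assume "z \<in> qcoset U (a + b)"
    then obtain u where "u \<in> U" "z = (a + u) + (b + 0)" unfolding qcoset_def by auto
    moreover have "0 \<in> U" using assms unfolding add_subgroup_def by blast
    ultimately show "z \<in> q_add (qcoset U a) (qcoset U b)" unfolding q_add_def qcoset_def by blast
  qed
qed

lemma qc_scale:
  assumes "add_subgroup U" "module smult" "\<And>r x. x \<in> U \<Longrightarrow> smult r x \<in> U"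
  shows "q_scale smult U r (qcoset U a) = qcoset U (smult r a)"
proof (rule set_eqI)
  fix z
  interpret module smult by fact
  show "z \<in> q_scale smult U r (qcoset U a) \<longleftrightarrow> z \<in> qcoset U (smult r a)"
  proof
    assume "z \<in> q_scale smult U r (qcoset U a)"
    then obtain u v where "u \<in> U" "v \<in> U" "z = smult r (a + u) + v"
      unfolding q_scale_def qcoset_def by auto
    moreover then have "smult r u + v \<in> U" using assms unfolding add_subgroup_def by blast
    ultimately show "z \<in> qcoset U (smult r a)" unfolding qcoset_def
      by (auto intro!: exI[of _ "smult r u + v"] simp: algebra_simps)
  next
    assume "z \<in> qcoset U (smult r a)"
    then obtain u where "u \<in> U" "z = smult r (a + 0) + u" unfolding qcoset_def by auto
    moreover have "0 \<in> U" using assms unfolding add_subgroup_def by blast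
    ultimately show "z \<in> q_scale smult U r (qcoset U a)" unfolding q_scale_def qcoset_def by blast
  qed
qed

lemma hsums_qc_to:
  assumes "add_subgroup U"
  shows "x \<in> hsums 0 (+) A \<Longrightarrow> qcoset U x \<in> hsums U q_add (\<lambda>g. qcoset U ` A g)"
proof (induction rule: hsums.induct)
  case hsums_zero show ?case using qc_zero[of U] by (simp add: hsums.hsums_zero)
next
  case (hsums_add x g y)
  then show ?case using qc_add[OF assms, of x y] by (metis hsums.hsums_add imageI)
qed

lemma hsums_qc_from:
  assumes "add_subgroup U"
  shows "c \<in> hsums U q_add B \<Longrightarrow> (\<And>g. B g \<subseteq> range (qcoset U)) \<Longrightarrow>
     \<exists>x \<in> hsums 0 (+) (\<lambda>g. {x. qcoset U x \<in> B g}). c = qcoset U x"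
proof (induction rule: hsums.induct)
  case hsums_zero show ?case using qc_zero[of U] by (auto intro: hsums.hsums_zero)
next
  case (hsums_add b g c)
  then obtain x where x: "x \<in> hsums 0 (+) (\<lambda>g. {x. qcoset U x \<in> B g})" "c = qcoset U x" by blast
  obtain y where y: "b = qcoset U y" using hsums_add.hyps(1) hsums_add.prems by blast
  have "y + x \<in> hsums 0 (+) (\<lambda>g. {x. qcoset U x \<in> B g})"
    using x(1) y hsums_add.hyps(1) by (auto intro: hsums.hsums_add)
  moreover have "q_add b c = qcoset U (y + x)" using qc_add[OF assms] x y by simp
  ultimately show ?case by blast
qed



lemma U_subgroup:
  assumes "module smult" "gr_submodule UNIV 0 (+) smult Mg U"
  shows "add_subgroup U" "\<And>r x. x \<in> U \<Longrightarrow> smult r x \<in> U"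
proof -
  interpret module smult by fact
  show sc: "\<And>r x. x \<in> U \<Longrightarrow> smult r x \<in> U" using assms(2) unfolding gr_submodule_def by blast
  have "\<And>x. x \<in> U \<Longrightarrow> - x \<in> U" using sc[of _ "-1"] by simp
  then show "add_subgroup U" using assms(2) unfolding gr_submodule_def add_subgroup_def by blast
qed

lemma hom_pow:
  assumes "graded_module Rg smult Mg" "r \<in> Rg g" "x \<in> Mg h"
  shows "\<exists>d. smult (r ^ j) x \<in> Mg d"
proof (induction j)
  case 0
  interpret module smult using assms(1) unfolding graded_module_def by blast
  show ?case using assms(3) by auto
next
  case (Suc j)
  interpret module smult using assms(1) unfolding graded_module_def by blast
  from Suc obtain d where "smult (r ^ j) x \<in> Mg d" by blast
  then have "smult r (smult (r ^ j) x) \<in> Mg (g + d)"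
    using assms(1,2) unfolding graded_module_def by blast
  then show ?case by (auto simp: mult.commute)
qed

lemma main_L:
  assumes gm: "graded_module Rg smult Mg" and idsR: "internal_direct_sum Rg"
    and sub: "gr_submodule UNIV 0 (+) smult Mg U"
    and J: "J_gr_quot smult Mg U = {U}"
    and r: "r \<in> Rg g" and x: "x \<in> Mg h" and pn: "smult (r ^ n) x \<in> U"
  shows "smult r x \<in> U"
proof (rule ccontr)
  assume notin: "smult r x \<notin> U"
  have md: "module smult" using gm unfolding graded_module_def by blast
  interpret module smult by fact
  note sg = U_subgroup[OF md sub]
  define N where "N = range (qcoset U)"
  define Ng where "Ng = (\<lambda>g. qcoset U ` Mg g)"
  define qs where "qs = q_scale smult U"
  have qsc: "\<And>c a. qs c (qcoset U a) = qcoset U (smult c a)"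
    unfolding qs_def using qc_scale[OF sg(1) md sg(2)] by blast
  have qad: "\<And>a b. q_add (qcoset U a) (qcoset U b) = qcoset U (a + b)" using qc_add[OF sg(1)] by blast
  have "qcoset U (smult r x) \<noteq> U" using qc_is_U[OF sg(1)] notin by blast
  then have "qcoset U (smult r x) \<notin> J_gr N U q_add qs Ng"
    using J unfolding J_gr_quot_def N_def Ng_def qs_def by blast
  then obtain S where max: "gr_maximal N U q_add qs Ng S" and nS: "qcoset U (smult r x) \<notin> S"
    unfolding J_gr_def N_def by blast
  have Ssub: "gr_submodule N U q_add qs Ng S" using max unfolding gr_maximal_def by blast
  have US: "U \<in> S" and Sadd: "\<And>a b. a \<in> S \<Longrightarrow> b \<in> S \<Longrightarrow> q_add a b \<in> S"
    and Ssc: "\<And>c a. a \<in> S \<Longrightarrow> qs c a \<in> S" and SN: "S \<subseteq> N"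
    and Sgr: "S \<subseteq> hsums U q_add (\<lambda>g. S \<inter> Ng g)"
    using Ssub unfolding gr_submodule_def by blast+
  define P where "P = (\<lambda>k. qcoset U (smult (r ^ k) x) \<in> S)"
  have Pmono: "P (k + j)" if "P k" for k j
  proof -
    have "qs (r ^ j) (qcoset U (smult (r ^ k) x)) \<in> S" using that Ssc unfolding P_def by blast
    then show ?thesis unfolding P_def qsc by (simp add: power_add mult.commute)
  qed
  have Pn: "P n" unfolding P_def using pn qc_is_U[OF sg(1)] US by metis
  have nP1: "\<not> P 1" unfolding P_def using nS by simp
  have nP0: "\<not> P 0"
  proof
    assume "P 0" then have "P (0 + 1)" by (rule Pmono)
    with nP1 show False by simp
  qed
  define k where "k = (LEAST k. P k)"
  have Pk: "P k" unfolding k_def using Pn by (rule LeastI)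
  have k2: "k \<ge> 2"
  proof (rule ccontr)
    assume "\<not> k \<ge> 2" then have "k = 0 \<or> k = 1" by auto
    then show False using Pk nP0 nP1 by auto
  qed
  have nPk1: "\<not> P (k - 1)"
  proof
    assume "P (k - 1)" then have "k \<le> k - 1" unfolding k_def by (rule Least_le)
    then show False using k2 by simp
  qed
  define y where "y = smult (r ^ (k - 1)) x"
  obtain d where yd: "y \<in> Mg d" unfolding y_def using hom_pow[OF gm r x] by blast
  define T where "T = {qcoset U (m + smult a y) | m a. qcoset U m \<in> S}"
  have TI: "qcoset U (m + smult a y) \<in> T" if "qcoset U m \<in> S" for m a
    unfolding T_def using that by blast
  have U0: "qcoset U 0 \<in> S" using US qc_zero[of U] by simp
  have ST: "S \<subseteq> T"
  proof
    fix c assume cS: "c \<in> S"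
    then obtain m where cm: "c = qcoset U m" using SN unfolding N_def by blast
    have "qcoset U (m + smult 0 y) \<in> T" using TI cS cm by blast
    then show "c \<in> T" using cm by simp
  qed
  have yT: "qcoset U y \<in> T" using TI[OF U0, of 1] by simp
  have yS: "qcoset U y \<notin> S" using nPk1 unfolding P_def y_def .
  have Tsub: "gr_submodule N U q_add qs Ng T"
    unfolding gr_submodule_def
  proof (intro conjI ballI allI)
    show "T \<subseteq> N" unfolding T_def N_def by blast
    show "U \<in> T" using ST US by blast
  next
    fix a b assume "a \<in> T" "b \<in> T"
    then obtain m1 a1 m2 a2 where ab: "a = qcoset U (m1 + smult a1 y)" "qcoset U m1 \<in> S"
      "b = qcoset U (m2 + smult a2 y)" "qcoset U m2 \<in> S" unfolding T_def by blast
    have S12: "qcoset U (m1 + m2) \<in> S" using Sadd[OF ab(2,4)] qad by simp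
    have e: "(m1 + smult a1 y) + (m2 + smult a2 y) = (m1 + m2) + smult (a1 + a2) y"
      by (simp add: algebra_simps)
    have "q_add a b = qcoset U ((m1 + m2) + smult (a1 + a2) y)" unfolding ab(1,3) qad e ..
    then show "q_add a b \<in> T" using TI[OF S12] by simp
  next
    fix c a assume "a \<in> T"
    then obtain m a1 where am: "a = qcoset U (m + smult a1 y)" "qcoset U m \<in> S" unfolding T_def by blast
    have Sc: "qcoset U (smult c m) \<in> S" using Ssc[OF am(2)] qsc by simp
    have e: "smult c (m + smult a1 y) = smult c m + smult (c * a1) y"
      by (simp add: algebra_simps)
    have "qs c a = qcoset U (smult c m + smult (c * a1) y)" unfolding am(1) qsc e ..
    then show "qs c a \<in> T" using TI[OF Sc] by simp
  next
    show "T \<subseteq> hsums U q_add (\<lambda>g. T \<inter> Ng g)"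
    proof
      fix t assume "t \<in> T"
      then obtain m a where t: "t = qcoset U (m + smult a y)" and mS: "qcoset U m \<in> S"
        unfolding T_def by blast
      define A where "A = (\<lambda>g. {z. qcoset U z \<in> T \<inter> Ng g})"
      have "qcoset U m \<in> hsums U q_add (\<lambda>g. S \<inter> Ng g)" using Sgr mS by blast
      then obtain m' where m': "m' \<in> hsums 0 (+) (\<lambda>g. {z. qcoset U z \<in> S \<inter> Ng g})"
        "qcoset U m = qcoset U m'"
        using hsums_qc_from[OF sg(1)] SN unfolding N_def by blast
      have m'A: "m' \<in> hsums 0 (+) A"
        by (rule hsums_mono[OF m'(1)]) (use ST in \<open>auto simp: A_def\<close>)
      have "a \<in> hsums 0 (+) Rg" using ids_hsums[OF idsR] .
      then have "smult a y \<in> hsums 0 (+) A"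
      proof (induction rule: hsums.induct)
        case hsums_zero show ?case by (simp add: hsums.hsums_zero)
      next
        case (hsums_add b g a')
        have "smult b y \<in> Mg (g + d)" using gm hsums_add.hyps(1) yd unfolding graded_module_def by blast
        moreover have "qcoset U (smult b y) \<in> T" using TI[OF U0, of b] by simp
        ultimately have "smult b y \<in> A (g + d)" unfolding A_def Ng_def by blast
        then show ?case using hsums_add.IH by (simp add: scale_left_distrib hsums.hsums_add)
      qed
      then have "m' + smult a y \<in> hsums 0 (+) A" using m'A hsums_plus by blast
      then have "qcoset U (m' + smult a y) \<in> hsums U q_add (\<lambda>g. qcoset U ` A g)"
        using hsums_qc_to[OF sg(1)] by blast
      moreover have "qcoset U (m' + smult a y) = t" unfolding t
        using m'(2) qad by metis
      ultimately show "t \<in> hsums U q_add (\<lambda>g. T \<inter> Ng g)"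
        by (auto elim!: hsums_mono simp: A_def)
    qed
  qed
  have "T = S \<or> T = N" using max Tsub ST unfolding gr_maximal_def by blast
  then have TN: "T = N" using yT yS by blast
  have "qcoset U x \<in> T" using TN unfolding N_def by blast
  then obtain m a where xa: "qcoset U x = qcoset U (m + smult a y)" and mS: "qcoset U m \<in> S"
    unfolding T_def by blast
  have "qcoset U y = qs (r ^ (k - 1)) (qcoset U x)" unfolding y_def qsc ..
  also have "\<dots> = qcoset U (smult (r ^ (k - 1)) m + smult a (smult (r ^ (k - 1)) y))"
    unfolding xa qsc by (simp add: algebra_simps mult.commute)
  also have "\<dots> = q_add (qs (r ^ (k - 1)) (qcoset U m)) (qs a (qcoset U (smult (r ^ (k + (k - 2))) x)))"
  proof -
    have "(k - 1) + (k - 1) = k + (k - 2)" using k2 by simp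
    then have "r ^ (k - 1) * r ^ (k - 1) = r ^ (k + (k - 2))"
      by (metis power_add)
    then show ?thesis unfolding qsc qad y_def by simp
  qed
  finally have "qcoset U y \<in> S" using Sadd Ssc mS Pmono[OF Pk, of "k - 2"] unfolding P_def by simp
  then show False using yS by blast
qed



lemma sum_in_sub:
  assumes "0 \<in> U" "\<And>a b. a \<in> U \<Longrightarrow> b \<in> U \<Longrightarrow> a + b \<in> U"
  shows "finite H \<Longrightarrow> (\<forall>h\<in>H. t h \<in> U) \<Longrightarrow> sum t H \<in> U"
  by (induction rule: finite_induct) (auto simp: assms)

lemma colon_comp:
  assumes gm: "graded_module Rg smult Mg"
    and sub: "gr_submodule UNIV 0 (+) smult Mg U"
    and F: "finite F" "\<forall>g\<in>F. f g \<in> Rg g" and rU: "smult (sum f F) m \<in> U"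
    and g: "g \<in> F" and m: "m \<in> Mg h"
  shows "smult (f g) m \<in> U"
proof -
  have md: "module smult" and idsM: "internal_direct_sum Mg"
    and sh: "\<And>g h a m. a \<in> Rg g \<Longrightarrow> m \<in> Mg h \<Longrightarrow> smult a m \<in> Mg (g + h)"
    using gm unfolding graded_module_def by blast+
  interpret module smult by fact
  note sg = U_subgroup[OF md sub]
  define D where "D = (\<lambda>g'. g' + h) ` F"
  define p where "p = (\<lambda>d. smult (f (d + - h)) m)"
  have inj: "inj_on (\<lambda>g'. g' + h) F" by (rule inj_onI) simp
  have "smult (sum f F) m = (\<Sum>g'\<in>F. smult (f g') m)" by (rule scale_sum_left)
  also have "\<dots> = sum (p \<circ> (\<lambda>g'. g' + h)) F" by (rule sum.cong) (simp_all add: p_def add.assoc)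
  also have "\<dots> = sum p D" unfolding D_def using sum.reindex[OF inj, of p] by simp
  finally have eq1: "smult (sum f F) m = sum p D" .
  have pD: "\<forall>d\<in>D. p d \<in> Mg d" unfolding D_def p_def using F(2) m sh by (auto simp: add.assoc)
  have clM: "\<And>d a b. a \<in> Mg d \<Longrightarrow> b \<in> Mg d \<Longrightarrow> a + b \<in> Mg d"
    using idsM unfolding internal_direct_sum_def add_subgroup_def by blast
  have "smult (sum f F) m \<in> hsums 0 (+) (\<lambda>d. U \<inter> Mg d)"
    using rU sub unfolding gr_submodule_def by blast
  then obtain E q where E: "finite E" "\<forall>d\<in>E. q d \<in> U \<inter> Mg d" "smult (sum f F) m = sum q E"
    using hsums_sum[of _ "\<lambda>d. U \<inter> Mg d"] sg(1) clM unfolding add_subgroup_def by (metis IntE IntI)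
  have "(if g + h \<in> D then p (g + h) else 0) = (if g + h \<in> E then q (g + h) else 0)"
    by (rule decomp_unique[OF idsM]) (use F(1) pD E eq1 in \<open>auto simp: D_def\<close>)
  moreover have "g + h \<in> D" unfolding D_def using g by blast
  moreover have "p (g + h) = smult (f g) m" unfolding p_def by (simp add: add.assoc)
  moreover have "0 \<in> U" using sg(1) unfolding add_subgroup_def by blast
  ultimately show ?thesis using E(2) by (auto split: if_splits)
qed

lemma in_J: "z \<in> J_gr N z add scale Ng" if "z \<in> N"
  using that unfolding J_gr_def gr_maximal_def gr_submodule_def by blast

theorem theorem2p19:
  fixes Rg :: "'g::group_add \<Rightarrow> 'r::comm_ring_1 set"
    and smult :: "'r \<Rightarrow> 'm::ab_group_add \<Rightarrow> 'm"
    and Mg :: "'g \<Rightarrow> 'm set"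
    and U :: "'m set"
  assumes "graded_ring Rg"
    and "graded_module Rg smult Mg"
    and "faithful smult"
    and "gr_submodule UNIV 0 (+) smult Mg U" and "U \<noteq> UNIV"
    and "J_gr_quot smult Mg U = {U}"
    and "J_gr UNIV 0 (+) (*) Rg \<subseteq> colon smult U"
  shows "gr_weakly_Jgr_semiprime Rg smult Mg U \<longleftrightarrow>
         gr_weakly_Jgr_semiprime_ideal Rg (colon smult U)"
proof -
  note gm = assms(2) and sub = assms(4) and J = assms(6)
  have idsR: "internal_direct_sum Rg" using assms(1) unfolding graded_ring_def by blast
  have md: "module smult" and idsM: "internal_direct_sum Mg"
    and sh: "\<And>g h a m. a \<in> Rg g \<Longrightarrow> m \<in> Mg h \<Longrightarrow> smult a m \<in> Mg (g + h)"
    using gm unfolding graded_module_def by blast+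
  interpret module smult by fact
  note sg = U_subgroup[OF md sub]
  have U0: "0 \<in> U" and Uadd: "\<And>a b. a \<in> U \<Longrightarrow> b \<in> U \<Longrightarrow> a + b \<in> U"
    using sg(1) unfolding add_subgroup_def by blast+
  note L = main_L[OF gm idsR sub J]
  have A: "gr_weakly_Jgr_semiprime Rg smult Mg U"
    unfolding gr_weakly_Jgr_semiprime_def
  proof (intro conjI allI impI)
    fix g h r m and n :: nat
    assume r: "r \<in> Rg g" and m: "m \<in> Mg h" and "smult (r ^ n) m \<in> U"
    then have "smult r m \<in> U" using L by blast
    moreover have "0 \<in> J_gr UNIV 0 (+) smult Mg" by (rule in_J) simp
    moreover have "smult r m = smult r m + 0" by simp
    ultimately show "smult r m \<in> {u + j |u j. u \<in> U \<and> j \<in> J_gr UNIV 0 (+) smult Mg}"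
      by blast
  qed (use sub assms(5) in auto)
  have colon_mem: "r \<in> colon smult U \<longleftrightarrow> (\<forall>m. smult r m \<in> U)" for r
    unfolding colon_def by simp
  have allm: "smult r m \<in> U"
    if h: "\<And>h x. x \<in> Mg h \<Longrightarrow> smult r x \<in> U" for r m
  proof -
    obtain H e where H: "finite H" "\<forall>h\<in>H. e h \<in> Mg h" "m = sum e H" using ids_sum[OF idsM] by metis
    have "smult r m = (\<Sum>h\<in>H. smult r (e h))" unfolding H(3) by (rule scale_sum_right)
    also have "\<dots> \<in> U" by (rule sum_in_sub[OF U0 Uadd H(1)]) (use H(2) h in auto)
    finally show ?thesis .
  qed
  have B: "gr_weakly_Jgr_semiprime_ideal Rg (colon smult U)"
    unfolding gr_weakly_Jgr_semiprime_ideal_def gr_weakly_Jgr_semiprime_def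
  proof (intro conjI allI impI)
    show "gr_submodule UNIV 0 (+) (*) Rg (colon smult U)"
      unfolding gr_submodule_def
    proof (intro conjI ballI allI)
      show "colon smult U \<subseteq> UNIV" by simp
      show "0 \<in> colon smult U" using U0 by (simp add: colon_mem)
    next
      fix a b assume "a \<in> colon smult U" "b \<in> colon smult U"
      then show "a + b \<in> colon smult U" using Uadd by (simp add: colon_mem scale_left_distrib)
    next
      fix c a assume "a \<in> colon smult U"
      then have "\<forall>m. smult c (smult a m) \<in> U" using sg(2) by (simp only: colon_mem) blast
      then show "c * a \<in> colon smult U" unfolding colon_mem by simp
    next
      show "colon smult U \<subseteq> hsums 0 (+) (\<lambda>g. colon smult U \<inter> Rg g)"
      proof
        fix r assume rc: "r \<in> colon smult U"
        obtain F f where F: "finite F" "\<forall>g\<in>F. f g \<in> Rg g" "r = sum f F" using ids_sum[OF idsR] by metis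
        have "\<forall>g\<in>F. f g \<in> colon smult U \<inter> Rg g"
        proof
          fix g assume g: "g \<in> F"
          have "smult (f g) m \<in> U" for m
          proof (rule allm)
            fix h x assume xh: "x \<in> Mg h"
            show "smult (f g) x \<in> U"
            proof (rule colon_comp[OF gm sub F(1,2) _ g xh])
              show "smult (sum f F) x \<in> U" using rc F(3) unfolding colon_mem by blast
            qed
          qed
          then show "f g \<in> colon smult U \<inter> Rg g" using F(2) g by (simp add: colon_mem)
        qed
        then have "sum f F \<in> hsums 0 (+) (\<lambda>g. colon smult U \<inter> Rg g)" by (rule sum_hsums[OF F(1)])
        then show "r \<in> hsums 0 (+) (\<lambda>g. colon smult U \<inter> Rg g)" using F(3) by simp
      qed
    qed
  next
    show "colon smult U \<noteq> UNIV"
    proof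
      assume "colon smult U = UNIV"
      then have "1 \<in> colon smult U" by simp
      then have "\<forall>m. smult 1 m \<in> U" unfolding colon_mem .
      then show False using assms(5) by auto
    qed
  next
    fix g h r s and n :: nat
    assume r: "r \<in> Rg g" and s: "s \<in> Rg h" and rn: "r ^ n * s \<in> colon smult U"
    have "smult (r * s) m \<in> U" for m
    proof (rule allm)
      fix h' x assume x: "x \<in> Mg h'"
      have sx: "smult s x \<in> Mg (h + h')" using sh s x .
      have "smult (r ^ n) (smult s x) \<in> U" using rn by (simp add: colon_mem)
      then have "smult r (smult s x) \<in> U" using L[OF r sx] by blast
      then show "smult (r * s) x \<in> U" by simp
    qed
    then have "r * s \<in> colon smult U" unfolding colon_mem by blast
    moreover have "0 \<in> J_gr UNIV 0 (+) (*) Rg" by (rule in_J) simp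
    moreover have "r * s = r * s + 0" by simp
    ultimately show "r * s \<in> {u + j |u j. u \<in> colon smult U \<and> j \<in> J_gr UNIV 0 (+) (*) Rg}"
      by blast
  qed
  show ?thesis using A B by blast
qed


end
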